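(* Let $N$ be a conditionally acyclic TCP-net over variables $V$ in which every CPT order $\succ^X_p$ has a greatest element, and let $\mathbf{x}$ be a (possibly empty) assignment to a subset $\mathbf{X}\subseteq V$. Let $o$ be the outcome produced by the forward sweep procedure: traverse the variables in a topological order of the directed graph $(V,\mathsf{cp})$, keep the value given by $\mathbf{x}$ for variables in $\mathbf{X}$, and set each other variable $X$ to the greatest element of $\succ^X_p$, where $p$ is the (already fixed) assignment to $Pa(X)$. Then $o\in Comp(\mathbf{x})$ and $o$ is the most preferred outcome in $Comp(\mathbf{x})$, i.e. $N\models o\succ o'$ for every $o'\in Comp(\mathbf{x})$ with $o'\neq o$.
   Context: Let $V$ be a finite set of variables, each $X$ with a finite nonempty domain $D(X)$; for $U\subseteq V$, $D(U)$ is the set of assignments to $U$, an outcome is an element of $D(V)$, and juxtaposition of assignments to disjoint sets denotes their combination. For an assignment $\mathbf{x}$ to $\mathbf{X}\subseteq V$, $Comp(\mathbf{x})$ is the set of outcomes extending $\mathbf{x}$. A TCP-net is a tuple $N=\langle V,\mathsf{cp},\mathsf{i},\mathsf{ci},\mathsf{cpt},\mathsf{cit}\rangle$ where: $\mathsf{cp}$ is a set of directed cp-arcs $(X,Y)$ between distinct variables, with $Pa(X)=\{X' : (X',X)\in\mathsf{cp}\}$; $\mathsf{i}$ is a set of directed i-arcs $(X,Y)$ between distinct variables; $\mathsf{ci}$ is a set of undirected ci-arcs $\{X,Y\}$ between distinct variables, each with a nonempty selector set $S(X,Y)\subseteq V\setminus\{X,Y\}$; $\mathsf{cpt}$ assigns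 to each $X$ a table $CPT(X)$ mapping each $p\in D(Pa(X))$ to a strict partial order $\succ^X_p$ on $D(X)$ (for an assignment $u$ fixing the values of $Pa(X)$, $\succ^X_u$ denotes $\succ^X_p$ for the values $p$ that $u$ gives to $Pa(X)$); $\mathsf{cit}$ assigns to each ci-arc $\gamma=\{X,Y\}$ a table $CIT(\gamma)$, a possibly partial map from $D(S(X,Y))$ to $\{X\rhd Y,\ Y\rhd X\}$. A strict partial order $\succ$ on $D(V)$ satisfies $CPT(X)$ iff for all $p\in D(Pa(X))$, all $w\in D(V\setminus(\{X\}\cup Pa(X)))$ and all $x,x'\in D(X)$ with $x\succ^X_p x'$: $xpw\succ x'pw$. It satisfies an i-arc $(X,Y)$ iff for every $w\in D(V\setminus\{X,Y\})$, all $x,x'\in D(X)$ with $x\succ^X_w x'$ and all $y,y'\in D(Y)$: $xyw\succ x'y'w$. It satisfies $CIT(\gamma)$ for a ci-arc $\gamma=\{X,Y\}$ with $Z=S(X,Y)$ iff for every $z\in D(Z)$ at which $CIT(\gamma)$ is defined and equals $X\rhd Y$, every $w\in D(V\setminus(\{X,Y\}\cup Z))$, all $x,x'$ with $x\succ^X_{zw}x'$ and all $y,y'\in D(Y)$: $xyzw\succ x'y'zw$ (symmetrically for $Y\rhd X$). $\succ$ satisfies $N$ iff it satisfies every CPT, i-arc and CIT; $N\models o\succ o'$ means $o\succ o'$ holds in every strict partial order on $D(V)$ satisfying $N$. The dependency graph $N^\star$ has vertex set $V$, the cp-arcs and i-arcs as directed edges, the ci-arcs as undirected edges, and additionally, for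 every ci-arc $\{X_i,X_j\}$ and every $X_k\in S(X_i,X_j)$, the directed edges $(X_k,X_i)$ and $(X_k,X_j)$ (if not already present). Let $S(N)$ be the union of all selector sets. For $w\in D(S(N))$, the $w$-directed graph of $N^\star$ consists of the vertices and directed edges of $N^\star$ together with, for every ci-arc $\{X_i,X_j\}$ whose CIT maps the restriction of $w$ to $S(X_i,X_j)$ to $X_i\rhd X_j$, a directed edge $(X_i,X_j)$ (if not already present). $N$ is conditionally acyclic iff every $w$-directed graph is acyclic. *)

theory Defs
  imports Main
begin

text \<open>Combination of assignments to disjoint sets is map_add (++).\<close>

record ('v, 'd) tcpnet =
  vars  :: "'v set"
  Dom   :: "'v \<Rightarrow> 'd set"
  cp    :: "('v \<times> 'v) set"
  iarcs :: "('v \<times> 'v) set"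
  ciarcs :: "'v set set"
  sel   :: "'v set \<Rightarrow> 'v set"
  cpt   :: "'v \<Rightarrow> ('v \<rightharpoonup> 'd) \<Rightarrow> ('d \<times> 'd) set"
  cit   :: "'v set \<Rightarrow> ('v \<rightharpoonup> 'd) \<Rightarrow> 'v option"
    \<comment> \<open>cit gamma z = Some X means X \<rhd> Y; None means undefined\<close>

definition asgs :: "('v, 'd) tcpnet \<Rightarrow> 'v set \<Rightarrow> ('v \<rightharpoonup> 'd) set" where
  "asgs N U = {a. dom a = U \<and> (\<forall>X\<in>U. the (a X) \<in> Dom N X)}"

definition outcomes :: "('v, 'd) tcpnet \<Rightarrow> ('v \<rightharpoonup> 'd) set" where
  "outcomes N = asgs N (vars N)"

definition Comp :: "('v, 'd) tcpnet \<Rightarrow> ('v \<rightharpoonup> 'd) \<Rightarrow> ('v \<rightharpoonup> 'd) set" where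
  "Comp N x = {oc \<in> outcomes N. x \<subseteq>\<^sub>m oc}"

definition Pa :: "('v, 'd) tcpnet \<Rightarrow> 'v \<Rightarrow> 'v set" where
  "Pa N X = {X'. (X', X) \<in> cp N}"

definition strict_po_on :: "'a set \<Rightarrow> ('a \<times> 'a) set \<Rightarrow> bool" where
  "strict_po_on A r \<longleftrightarrow> r \<subseteq> A \<times> A \<and> (\<forall>a. (a, a) \<notin> r) \<and> trans r"

definition wf_tcpnet :: "('v, 'd) tcpnet \<Rightarrow> bool" where
  "wf_tcpnet N \<longleftrightarrow>
     finite (vars N) \<and>
     (\<forall>X\<in>vars N. finite (Dom N X) \<and> Dom N X \<noteq> {}) \<and>
     (\<forall>(X, Y)\<in>cp N. X \<in> vars N \<and> Y \<in> vars N \<and> X \<noteq> Y) \<and>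
     (\<forall>(X, Y)\<in>iarcs N. X \<in> vars N \<and> Y \<in> vars N \<and> X \<noteq> Y) \<and>
     (\<forall>g\<in>ciarcs N. (\<exists>X Y. g = {X, Y} \<and> X \<noteq> Y \<and> X \<in> vars N \<and> Y \<in> vars N) \<and>
        sel N g \<noteq> {} \<and> sel N g \<subseteq> vars N - g \<and>
        (\<forall>z\<in>asgs N (sel N g). cit N g z = None \<or> (\<exists>X\<in>g. cit N g z = Some X))) \<and>
     (\<forall>X\<in>vars N. \<forall>p\<in>asgs N (Pa N X). strict_po_on (Dom N X) (cpt N X p))"

text \<open>x \<succ>^X_u x' : u fixes the values of Pa(X), and the CPT order at those values.\<close>
definition prefu :: "('v, 'd) tcpnet \<Rightarrow> 'v \<Rightarrow> ('v \<rightharpoonup> 'd) \<Rightarrow> 'd \<Rightarrow> 'd \<Rightarrow> bool" where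
  "prefu N X u x x' \<longleftrightarrow> Pa N X \<subseteq> dom u \<and> (x, x') \<in> cpt N X (u |` Pa N X)"

definition sat_cpt :: "('v, 'd) tcpnet \<Rightarrow> (('v \<rightharpoonup> 'd) \<times> ('v \<rightharpoonup> 'd)) set \<Rightarrow> 'v \<Rightarrow> bool" where
  "sat_cpt N R X \<longleftrightarrow>
     (\<forall>p\<in>asgs N (Pa N X). \<forall>w\<in>asgs N (vars N - ({X} \<union> Pa N X)). \<forall>x x'.
        (x, x') \<in> cpt N X p \<longrightarrow> ([X \<mapsto> x] ++ p ++ w, [X \<mapsto> x'] ++ p ++ w) \<in> R)"

definition sat_iarc :: "('v, 'd) tcpnet \<Rightarrow> (('v \<rightharpoonup> 'd) \<times> ('v \<rightharpoonup> 'd)) set \<Rightarrow> 'v \<Rightarrow> 'v \<Rightarrow> bool" where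
  "sat_iarc N R X Y \<longleftrightarrow>
     (\<forall>w\<in>asgs N (vars N - {X, Y}). \<forall>x x'. prefu N X w x x' \<longrightarrow>
        (\<forall>y\<in>Dom N Y. \<forall>y'\<in>Dom N Y. ([X \<mapsto> x, Y \<mapsto> y] ++ w, [X \<mapsto> x', Y \<mapsto> y'] ++ w) \<in> R))"

definition sat_cit :: "('v, 'd) tcpnet \<Rightarrow> (('v \<rightharpoonup> 'd) \<times> ('v \<rightharpoonup> 'd)) set \<Rightarrow> 'v set \<Rightarrow> bool" where
  "sat_cit N R g \<longleftrightarrow>
     (\<forall>z\<in>asgs N (sel N g). \<forall>X Y. g = {X, Y} \<longrightarrow> X \<noteq> Y \<longrightarrow> cit N g z = Some X \<longrightarrow>
        (\<forall>w\<in>asgs N (vars N - (g \<union> sel N g)). \<forall>x x'. prefu N X (z ++ w) x x' \<longrightarrow>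
          (\<forall>y\<in>Dom N Y. \<forall>y'\<in>Dom N Y.
             ([X \<mapsto> x, Y \<mapsto> y] ++ z ++ w, [X \<mapsto> x', Y \<mapsto> y'] ++ z ++ w) \<in> R)))"

definition satisfies :: "('v, 'd) tcpnet \<Rightarrow> (('v \<rightharpoonup> 'd) \<times> ('v \<rightharpoonup> 'd)) set \<Rightarrow> bool" where
  "satisfies N R \<longleftrightarrow> (\<forall>X\<in>vars N. sat_cpt N R X) \<and> (\<forall>(X, Y)\<in>iarcs N. sat_iarc N R X Y)
     \<and> (\<forall>g\<in>ciarcs N. sat_cit N R g)"

definition entails :: "('v, 'd) tcpnet \<Rightarrow> ('v \<rightharpoonup> 'd) \<Rightarrow> ('v \<rightharpoonup> 'd) \<Rightarrow> bool" where
  "entails N oc oc' \<longleftrightarrow>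
     (\<forall>R. strict_po_on (outcomes N) R \<and> satisfies N R \<longrightarrow> (oc, oc') \<in> R)"

definition SN :: "('v, 'd) tcpnet \<Rightarrow> 'v set" where
  "SN N = \<Union> (sel N ` ciarcs N)"

definition wgraph :: "('v, 'd) tcpnet \<Rightarrow> ('v \<rightharpoonup> 'd) \<Rightarrow> ('v \<times> 'v) set" where
  "wgraph N w = cp N \<union> iarcs N
     \<union> {(Xk, Xi). \<exists>g\<in>ciarcs N. Xi \<in> g \<and> Xk \<in> sel N g}
     \<union> {(Xi, Xj). \<exists>g\<in>ciarcs N. g = {Xi, Xj} \<and> Xi \<noteq> Xj \<and> cit N g (w |` sel N g) = Some Xi}"

definition cond_acyclic :: "('v, 'd) tcpnet \<Rightarrow> bool" where
  "cond_acyclic N \<longleftrightarrow> (\<forall>w\<in>asgs N (SN N). acyclic (wgraph N w))"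

definition topo_order :: "('v, 'd) tcpnet \<Rightarrow> 'v list \<Rightarrow> bool" where
  "topo_order N L \<longleftrightarrow> distinct L \<and> set L = vars N \<and>
     (\<forall>i j. i < length L \<longrightarrow> j < length L \<longrightarrow> (L ! i, L ! j) \<in> cp N \<longrightarrow> i < j)"

definition greatest_el :: "'d set \<Rightarrow> ('d \<times> 'd) set \<Rightarrow> 'd" where
  "greatest_el A r = (THE g. g \<in> A \<and> (\<forall>y\<in>A. y \<noteq> g \<longrightarrow> (g, y) \<in> r))"

fun sweep :: "('v, 'd) tcpnet \<Rightarrow> ('v \<rightharpoonup> 'd) \<Rightarrow> 'v list \<Rightarrow> ('v \<rightharpoonup> 'd) \<Rightarrow> ('v \<rightharpoonup> 'd)" where
  "sweep N x [] oc = oc"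
| "sweep N x (X # L) oc =
     sweep N x L (oc(X \<mapsto> (if X \<in> dom x then the (x X)
                          else greatest_el (Dom N X) (cpt N X (oc |` Pa N X)))))"

end

theory Submission
  imports Defs
begin

lemma sweep_append: "sweep N x (L1 @ L2) oc = sweep N x L2 (sweep N x L1 oc)"
  by (induction L1 arbitrary: oc) auto

lemma sweep_notin: "Z \<notin> set L \<Longrightarrow> sweep N x L oc Z = oc Z"
  by (induction L arbitrary: oc) auto

lemma sweep_dom: "dom (sweep N x L oc) = dom oc \<union> set L"
  by (induction L arbitrary: oc) auto

lemma sweep_at:
  assumes d: "distinct L" and i: "i < length L" and pa: "Pa N (L!i) \<subseteq> set (take i L)"
  shows "sweep N x L oc (L!i) = Some (if L!i \<in> dom x then the (x (L!i))
           else greatest_el (Dom N (L!i)) (cpt N (L!i) (sweep N x L oc |` Pa N (L!i))))"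
proof -
  define oc1 where "oc1 = sweep N x (take i L) oc"
  define v where "v = (if L!i \<in> dom x then the (x (L!i))
           else greatest_el (Dom N (L!i)) (cpt N (L!i) (oc1 |` Pa N (L!i))))"
  have Ld: "L = take i L @ L!i # drop (Suc i) L" using i by (simp add: id_take_nth_drop)
  have dd: "distinct (take i L @ L!i # drop (Suc i) L)" using d Ld by metis
  hence n1: "L!i \<notin> set (drop (Suc i) L)" and n2: "L!i \<notin> set (take i L)"
    and n3: "set (take i L) \<inter> set (drop (Suc i) L) = {}" by auto
  have eq: "sweep N x L oc = sweep N x (drop (Suc i) L) (oc1(L!i \<mapsto> v))"
    by (subst Ld, simp add: sweep_append oc1_def v_def)
  have r: "sweep N x L oc |` Pa N (L!i) = oc1 |` Pa N (L!i)"
  proof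
    fix Z show "(sweep N x L oc |` Pa N (L!i)) Z = (oc1 |` Pa N (L!i)) Z"
    proof (cases "Z \<in> Pa N (L!i)")
      case True
      hence "Z \<in> set (take i L)" using pa by auto
      hence "Z \<notin> set (drop (Suc i) L)" "Z \<noteq> L!i" using n2 n3 by auto
      thus ?thesis using True eq sweep_notin by (simp add: sweep_notin)
    qed simp
  qed
  have "sweep N x L oc (L!i) = Some v" unfolding eq using n1 by (simp add: sweep_notin)
  thus ?thesis using r by (simp add: v_def)
qed

lemma greatest_unique:
  assumes "strict_po_on A r" "g \<in> A" "\<forall>y\<in>A. y \<noteq> g \<longrightarrow> (g, y) \<in> r"
  shows "greatest_el A r = g"
  unfolding greatest_el_def
proof (rule the_equality)
  show "g \<in> A \<and> (\<forall>y\<in>A. y \<noteq> g \<longrightarrow> (g, y) \<in> r)" using assms by auto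
next
  fix g' assume h: "g' \<in> A \<and> (\<forall>y\<in>A. y \<noteq> g' \<longrightarrow> (g', y) \<in> r)"
  show "g' = g"
  proof (rule ccontr)
    assume "g' \<noteq> g"
    hence "(g', g) \<in> r" "(g, g') \<in> r" using h assms by auto
    thus False using assms(1) unfolding strict_po_on_def trans_def by blast
  qed
qed

lemma decomp:
  assumes "dom m = V" "Y \<in> V" "Y \<notin> P" "P \<subseteq> V"
  shows "[Y \<mapsto> c] ++ (m |` P) ++ (m |` (V - ({Y} \<union> P))) = m(Y \<mapsto> c)"
proof
  fix Z show "([Y \<mapsto> c] ++ (m |` P) ++ (m |` (V - ({Y} \<union> P)))) Z = (m(Y \<mapsto> c)) Z"
    using assms by (cases "Z \<in> V") (auto simp: map_add_def restrict_map_def split: option.split)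
qed

theorem corollary1:
  fixes N :: "('v, 'd) tcpnet" and Xs :: "'v set" and x :: "'v \<rightharpoonup> 'd" and L :: "'v list"
  assumes "wf_tcpnet N"
    and "cond_acyclic N"
    and "\<forall>X\<in>vars N. \<forall>p\<in>asgs N (Pa N X).
           \<exists>g\<in>Dom N X. \<forall>y\<in>Dom N X. y \<noteq> g \<longrightarrow> (g, y) \<in> cpt N X p"
    and "Xs \<subseteq> vars N"
    and "x \<in> asgs N Xs"
    and "topo_order N L"
  shows "sweep N x L Map.empty \<in> Comp N x \<and>
         (\<forall>o'\<in>Comp N x. o' \<noteq> sweep N x L Map.empty \<longrightarrow> entails N (sweep N x L Map.empty) o')"
proof -
  define oo where "oo = sweep N x L Map.empty"
  have wf: "wf_tcpnet N" by fact
  have finV: "finite (vars N)" using wf unfolding wf_tcpnet_def by blast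
  have cpV: "\<And>X Y. (X, Y) \<in> cp N \<Longrightarrow> X \<in> vars N \<and> Y \<in> vars N \<and> X \<noteq> Y"
    using wf unfolding wf_tcpnet_def by blast
  have spo: "\<And>X p. X \<in> vars N \<Longrightarrow> p \<in> asgs N (Pa N X) \<Longrightarrow> strict_po_on (Dom N X) (cpt N X p)"
    using wf unfolding wf_tcpnet_def by blast
  have paV: "\<And>X. Pa N X \<subseteq> vars N" using cpV unfolding Pa_def by blast
  have noself: "\<And>X. X \<notin> Pa N X" using cpV unfolding Pa_def by blast
  have dist: "distinct L" and setL: "set L = vars N"
    and topo: "\<And>i j. i < length L \<Longrightarrow> j < length L \<Longrightarrow> (L ! i, L ! j) \<in> cp N \<Longrightarrow> i < j"
    using assms(6) unfolding topo_order_def by auto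
  have domx: "dom x = Xs" and xD: "\<And>X. X \<in> Xs \<Longrightarrow> the (x X) \<in> Dom N X"
    using assms(5) unfolding asgs_def by auto
  have paidx: "\<And>i Z. i < length L \<Longrightarrow> Z \<in> Pa N (L!i) \<Longrightarrow> \<exists>j<i. Z = L!j"
  proof -
    fix i Z assume i: "i < length L" and Z: "Z \<in> Pa N (L!i)"
    hence "Z \<in> set L" using paV setL by auto
    then obtain j where j: "j < length L" "Z = L!j" by (auto simp: in_set_conv_nth)
    hence "j < i" using topo[OF j(1) i] Z unfolding Pa_def by auto
    thus "\<exists>j<i. Z = L!j" using j by auto
  qed
  have pa_take: "\<And>i. i < length L \<Longrightarrow> Pa N (L!i) \<subseteq> set (take i L)"
  proof
    fix i Z assume i: "i < length L" and Z: "Z \<in> Pa N (L!i)"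
    then obtain j where "j < i" "Z = L!j" using paidx by blast
    thus "Z \<in> set (take i L)" using i by (auto simp: in_set_conv_nth)
  qed
  have oval: "\<And>i. i < length L \<Longrightarrow> oo (L!i) = Some (if L!i \<in> dom x then the (x (L!i))
           else greatest_el (Dom N (L!i)) (cpt N (L!i) (oo |` Pa N (L!i))))"
    unfolding oo_def using sweep_at[OF dist _ pa_take] by blast
  have domo: "dom oo = vars N" unfolding oo_def by (simp add: sweep_dom setL)
  have indom: "\<And>i. i < length L \<Longrightarrow> the (oo (L!i)) \<in> Dom N (L!i)"
  proof -
    fix i show "i < length L \<Longrightarrow> the (oo (L!i)) \<in> Dom N (L!i)"
    proof (induction i rule: less_induct)
      case (less i)
      define X where "X = L!i"
      have XV: "X \<in> vars N" using less.prems setL X_def by auto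
      show ?case
      proof (cases "X \<in> dom x")
        case True
        thus ?thesis using oval[OF less.prems] domx xD X_def by auto
      next
        case False
        have "oo |` Pa N X \<in> asgs N (Pa N X)"
          unfolding asgs_def
        proof (intro CollectI conjI ballI)
          show "dom (oo |` Pa N X) = Pa N X" using domo paV by auto
        next
          fix Z assume "Z \<in> Pa N X"
          then obtain j where "j < i" "Z = L!j" using paidx less.prems X_def by blast
          thus "the ((oo |` Pa N X) Z) \<in> Dom N Z" using less.IH less.prems \<open>Z \<in> Pa N X\<close> by auto
        qed
        then obtain g where g: "g \<in> Dom N X" "\<forall>y\<in>Dom N X. y \<noteq> g \<longrightarrow> (g, y) \<in> cpt N X (oo |` Pa N X)"
          using assms(3) XV by blast
        have "greatest_el (Dom N X) (cpt N X (oo |` Pa N X)) = g"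
          using greatest_unique[OF spo[OF XV \<open>oo |` Pa N X \<in> _\<close>] g] .
        thus ?thesis using oval[OF less.prems] False g X_def by auto
      qed
    qed
  qed
  have indomV: "\<And>X. X \<in> vars N \<Longrightarrow> the (oo X) \<in> Dom N X"
    by (metis indom setL in_set_conv_nth)
  have pasg: "\<And>X. oo |` Pa N X \<in> asgs N (Pa N X)"
    unfolding asgs_def using domo paV indomV by auto
  have best: "\<And>X y. X \<in> vars N \<Longrightarrow> X \<notin> Xs \<Longrightarrow> y \<in> Dom N X \<Longrightarrow> y \<noteq> the (oo X) \<Longrightarrow>
       (the (oo X), y) \<in> cpt N X (oo |` Pa N X)"
  proof -
    fix X y assume XV: "X \<in> vars N" and nX: "X \<notin> Xs" and y: "y \<in> Dom N X" "y \<noteq> the (oo X)"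
    obtain i where i: "i < length L" "X = L!i" using XV setL by (metis in_set_conv_nth)
    obtain g where g: "g \<in> Dom N X" "\<forall>y\<in>Dom N X. y \<noteq> g \<longrightarrow> (g, y) \<in> cpt N X (oo |` Pa N X)"
      using assms(3) XV pasg by blast
    have "greatest_el (Dom N X) (cpt N X (oo |` Pa N X)) = g"
      using greatest_unique[OF spo[OF XV pasg] g] .
    hence "the (oo X) = g" using oval[OF i(1)] i nX domx by auto
    thus "(the (oo X), y) \<in> cpt N X (oo |` Pa N X)" using g y by auto
  qed
  have xsub: "x \<subseteq>\<^sub>m oo"
    unfolding map_le_def
  proof
    fix X assume "X \<in> dom x"
    then obtain i where i: "i < length L" "X = L!i" using domx assms(4) setL by (metis in_set_conv_nth subsetD)
    thus "x X = oo X" using oval[OF i(1)] \<open>X \<in> dom x\<close> by auto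
  qed
  have ooC: "oo \<in> Comp N x"
    unfolding Comp_def outcomes_def asgs_def using domo indomV xsub by auto
  have ent: "entails N oo o'" if o'C: "o' \<in> Comp N x" and ne: "o' \<noteq> oo" for o'
    unfolding entails_def
  proof (intro allI impI)
    fix R assume RR: "strict_po_on (outcomes N) R \<and> satisfies N R"
    have trR: "trans R" using RR unfolding strict_po_on_def by blast
    have satc: "\<And>X. X \<in> vars N \<Longrightarrow> sat_cpt N R X" using RR unfolding satisfies_def by blast
    have main: "\<forall>o'. o' \<in> Comp N x \<longrightarrow> o' \<noteq> oo \<longrightarrow> card {Y \<in> vars N. o' Y \<noteq> oo Y} = n \<longrightarrow> (oo, o') \<in> R"
      for n
    proof (induction n rule: less_induct)
      case (less n)
      show ?case
      proof (intro allI impI)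
        fix o' assume o'C: "o' \<in> Comp N x" and ne: "o' \<noteq> oo" and cn: "card {Y \<in> vars N. o' Y \<noteq> oo Y} = n"
        define D where "D = {Y \<in> vars N. o' Y \<noteq> oo Y}"
        have domo': "dom o' = vars N" and o'D: "\<And>X. X \<in> vars N \<Longrightarrow> the (o' X) \<in> Dom N X"
          and xsub': "x \<subseteq>\<^sub>m o'"
          using o'C unfolding Comp_def outcomes_def asgs_def by auto
        have "D \<noteq> {}"
        proof
          assume "D = {}"
          hence "o' = oo"
          proof -
            assume e: "D = {}"
            show "o' = oo"
            proof
              fix Z show "o' Z = oo Z"
              proof (cases "Z \<in> vars N")
                case True thus ?thesis using e unfolding D_def by blast
              next
                case False
                hence "Z \<notin> dom o'" "Z \<notin> dom oo" using domo domo' by auto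
                thus ?thesis by (simp add: domIff)
              qed
            qed
          qed
          thus False using ne by simp
        qed
        then obtain Y0 where "Y0 \<in> D" by blast
        then obtain i0 where "i0 < length L \<and> L!i0 \<in> D" using setL \<open>Y0 \<in> D\<close> unfolding D_def
          by (metis (no_types, lifting) mem_Collect_eq in_set_conv_nth)
        then obtain i where i: "i < length L" "L!i \<in> D" and mini: "\<forall>j<i. \<not> (j < length L \<and> L!j \<in> D)"
          using exists_least_iff[of "\<lambda>i. i < length L \<and> L!i \<in> D"] by blast
        define Y where "Y = L!i"
        have YV: "Y \<in> vars N" and YD: "o' Y \<noteq> oo Y" using i Y_def D_def by auto
        have nY: "Y \<notin> Xs"
        proof
          assume "Y \<in> Xs"
          hence "o' Y = x Y" "oo Y = x Y" using xsub xsub' domx unfolding map_le_def by auto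
          thus False using YD by simp
        qed
        have pe: "o' |` Pa N Y = oo |` Pa N Y"
        proof
          fix Z show "(o' |` Pa N Y) Z = (oo |` Pa N Y) Z"
          proof (cases "Z \<in> Pa N Y")
            case True
            then obtain j where j: "j < i" "Z = L!j" using paidx i(1) Y_def by blast
            hence "Z \<notin> D" using mini i(1) by auto
            moreover have "Z \<in> vars N" using True paV by auto
            ultimately show ?thesis using True unfolding D_def by auto
          qed simp
        qed
        define a where "a = the (oo Y)"
        define b where "b = the (o' Y)"
        have oY: "oo Y = Some a" using domo YV a_def by (metis domD option.sel)
        have o'Y: "o' Y = Some b" using domo' YV b_def by (metis domD option.sel)
        have ab: "a \<noteq> b" using oY o'Y YD by auto
        have bD: "b \<in> Dom N Y" using o'D YV b_def by auto
        have cab: "(a, b) \<in> cpt N Y (oo |` Pa N Y)" using best[OF YV nY bD] ab a_def by auto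
        define w where "w = o' |` (vars N - ({Y} \<union> Pa N Y))"
        have wA: "w \<in> asgs N (vars N - ({Y} \<union> Pa N Y))"
          unfolding asgs_def w_def using domo' o'D by auto
        have "([Y \<mapsto> a] ++ (oo |` Pa N Y) ++ w, [Y \<mapsto> b] ++ (oo |` Pa N Y) ++ w) \<in> R"
          using satc[OF YV] pasg wA cab unfolding sat_cpt_def by blast
        moreover have "[Y \<mapsto> a] ++ (oo |` Pa N Y) ++ w = o'(Y \<mapsto> a)"
          unfolding w_def pe[symmetric] using decomp[OF domo' YV noself paV] .
        moreover have "[Y \<mapsto> b] ++ (oo |` Pa N Y) ++ w = o'"
          unfolding w_def pe[symmetric] using decomp[OF domo' YV noself paV] o'Y
          by (simp add: map_upd_triv)
        ultimately have R1: "(o'(Y \<mapsto> a), o') \<in> R" by simp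
        show "(oo, o') \<in> R"
        proof (cases "o'(Y \<mapsto> a) = oo")
          case True thus ?thesis using R1 by simp
        next
          case False
          have o''C: "o'(Y \<mapsto> a) \<in> Comp N x"
            unfolding Comp_def outcomes_def asgs_def
            using domo' YV o'D indomV a_def xsub' nY domx
            by (auto simp: map_le_def)
          have "{Z \<in> vars N. (o'(Y \<mapsto> a)) Z \<noteq> oo Z} = D - {Y}"
            unfolding D_def using oY by auto
          moreover have "card (D - {Y}) < card D"
            using YV YD finV unfolding D_def by (intro card_Diff1_less) auto
          ultimately have lt: "card {Z \<in> vars N. (o'(Y \<mapsto> a)) Z \<noteq> oo Z} < n"
            using cn D_def by simp
          have "(oo, o'(Y \<mapsto> a)) \<in> R" using less.IH[OF lt] o''C False by blast
          thus ?thesis using R1 trR unfolding trans_def by blast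
        qed
      qed
    qed
    show "(oo, o') \<in> R" using main o'C ne by blast
  qed
  show ?thesis using ooC ent unfolding oo_def by blast
qed

end
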